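(* For all $\xi,\xi^*>0$ and $\eta\in(0,\infty)^p$, $$\big|\alpha_\eta(\xi,\xi^* )-\alpha_{\eta,\epsilon}(\xi,\xi^* )\big|\le \exp\Big\{\Big(N+(N+a_0)\frac{\|z\|^2}{b_0}\Big)\|W\|^2\delta\Big\}-1 .$$ In particular $\sup_{\xi,\xi^*,\eta}|\alpha_\eta(\xi,\xi^* )-\alpha_{\eta,\epsilon}(\xi,\xi^* )|=O(\delta)$ as $\delta\to0$, with constant depending only on $N,a_0,b_0,W,z$.
   Context: Fix $N,p\ge1$, $W\in\mathbb R^{N\times p}$, $z\in\mathbb R^N$, $a_0,b_0>0$, $\delta>0$; $\|\cdot\|$ is the Euclidean/operator norm. Let $\pi_\xi(t)\propto t^{-1/2}(1+t)^{-1}$. For $\eta\in(0,\infty)^p$ let $D=\mathrm{diag}(\eta_j^{-1})$. For $\xi,\xi^*>0$ let $\xi_{\max}^{-1}=\max\{\xi^{-1},(\xi^* )^{-1}\}$ and $D_\delta=\mathrm{diag}(\eta_j^{-1}\mathbf 1(\xi^{-1}_{\max}\eta_j^{-1}>\delta))$. For $t\in\{\xi,\xi^*\}$ let $M_t=I_N+t^{-1}WDW'$ and $M_{t,\delta}=I_N+t^{-1}WD_\delta W'$. Define $q_\eta(\xi,\xi^* )=\frac{|M_{\xi^*}|^{-1/2}(b_0+z'M_{\xi^*}^{-1}z)^{-(N+a_0)/2}}{|M_{\xi}|^{-1/2}(b_0+z'M_{\xi}^{-1}z)^{-(N+a_0)/2}}\cdot\frac{\pi_\xi(\xi^* )\,\xi^*}{\pi_\xi(\xi)\,\xi}$,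 let $q_{\eta,\delta}$ be the same expression with $M_t$ replaced by $M_{t,\delta}$, and set $\alpha_\eta=\min\{1,q_\eta\}$, $\alpha_{\eta,\epsilon}=\min\{1,q_{\eta,\delta}\}$. *)

theory Defs
  imports "HOL-Analysis.Analysis"
begin

text \<open>Unnormalised prior density of xi; the normalising constant cancels in q.\<close>
definition pi_xi :: "real \<Rightarrow> real" where
  "pi_xi t = t powr (-1/2) / (1 + t)"

definition Dmat :: "real^'p \<Rightarrow> real^'p^'p" where
  "Dmat eta = (\<chi> i j. if i = j then 1 / eta $ j else 0)"

definition Dmat_delta :: "real \<Rightarrow> real \<Rightarrow> real \<Rightarrow> real^'p \<Rightarrow> real^'p^'p" where
  "Dmat_delta \<delta> \<xi> \<xi>s eta =
     (\<chi> i j. if i = j \<and> max (1/\<xi>) (1/\<xi>s) * (1 / eta $ j) > \<delta> then 1 / eta $ j else 0)"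

definition Mmat :: "real^'p^'n \<Rightarrow> real^'p^'p \<Rightarrow> real \<Rightarrow> real^'n^'n" where
  "Mmat W D t = mat 1 + (1 / t) *\<^sub>R (W ** D ** transpose W)"

text \<open>Marginal-likelihood factor |M|^{-1/2} (b0 + z' M^{-1} z)^{-(N+a0)/2}.\<close>
definition lik :: "real \<Rightarrow> real \<Rightarrow> real^'n \<Rightarrow> real^'n^'n \<Rightarrow> real" where
  "lik a0 b0 z M = det M powr (-1/2) *
     (b0 + z \<bullet> (matrix_inv M *v z)) powr (- (real CARD('n) + a0) / 2)"

definition qfun :: "real \<Rightarrow> real \<Rightarrow> real^'p^'n \<Rightarrow> real^'n \<Rightarrow> real^'p^'p \<Rightarrow> real \<Rightarrow> real \<Rightarrow> real" where
  "qfun a0 b0 W z D \<xi> \<xi>s =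
     lik a0 b0 z (Mmat W D \<xi>s) / lik a0 b0 z (Mmat W D \<xi>) *
     (pi_xi \<xi>s * \<xi>s) / (pi_xi \<xi> * \<xi>)"

definition alpha :: "real \<Rightarrow> real \<Rightarrow> real^'p^'n \<Rightarrow> real^'n \<Rightarrow> real^'p \<Rightarrow> real \<Rightarrow> real \<Rightarrow> real" where
  "alpha a0 b0 W z eta \<xi> \<xi>s = min 1 (qfun a0 b0 W z (Dmat eta) \<xi> \<xi>s)"

definition alpha_approx :: "real \<Rightarrow> real \<Rightarrow> real \<Rightarrow> real^'p^'n \<Rightarrow> real^'n \<Rightarrow> real^'p \<Rightarrow> real \<Rightarrow> real \<Rightarrow> real" where
  "alpha_approx \<delta> a0 b0 W z eta \<xi> \<xi>s =
     min 1 (qfun a0 b0 W z (Dmat_delta \<delta> \<xi> \<xi>s eta) \<xi> \<xi>s)"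

end

theory Submission
  imports Defs
begin

definition outer :: "real^'n \<Rightarrow> real^'m \<Rightarrow> real^'m^'n" where
  "outer u v = (\<chi> i j. u$i * v$j)"

lemma det_single_row:
  fixes y :: "real^'n"
  shows "det (\<chi> i. if i = k then y else axis i 1 :: real^'n^'n) = y$k"
proof -
  have "(\<Sum>i\<in>UNIV. y$i *s row i (mat 1 :: real^'n^'n)) = y"
    by (simp add: vec_eq_iff row_def mat_def sum_component axis_def if_distrib cong: if_cong)
  moreover have "\<And>i. row i (mat 1 :: real^'n^'n) = axis i 1"
    by (simp add: vec_eq_iff row_def mat_def axis_def)
  ultimately show ?thesis
    using cramer_lemma_transpose[of k y "mat 1 :: real^'n^'n"] by (simp only:) simp
qed

lemma det_R:
  fixes v :: "real^'n"
  assumes "finite T" "k \<notin> T"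
  shows "det (\<chi> i. if i = k then v else if i \<in> T then axis i 1 + c i *s v else axis i 1 :: real^'n^'n) = v$k"
  using assms
proof (induction T rule: finite_induct)
  case empty
  have "(\<chi> i. if i = k then v else if i \<in> {} then axis i 1 + c i *s v else axis i 1 :: real^'n^'n)
      = (\<chi> i. if i = k then v else axis i 1)" by (simp add: vec_eq_iff)
  then show ?case using det_single_row[of k v] by simp
next
  case (insert j T)
  define A where "A = (\<chi> i. if i = k then v else if i \<in> T then axis i 1 + c i *s v else axis i 1 :: real^'n^'n)"
  have jk: "j \<noteq> k" using insert by auto
  have "(\<chi> i. if i = k then v else if i \<in> insert j T then axis i 1 + c i *s v else axis i 1 :: real^'n^'n)
      = (\<chi> i. if i = j then row j A + c j *s row k A else row i A)"
    using jk insert.hyps by (auto simp: vec_eq_iff A_def row_def)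
  also have "det \<dots> = det A" by (rule det_row_operation[OF jk])
  finally show ?case using insert by (simp add: A_def)
qed

lemma det_P:
  fixes x y :: "real^'n"
  assumes "finite T"
  shows "det (\<chi> i. if i \<in> T then axis i 1 + x$i *s y else axis i 1 :: real^'n^'n) = 1 + (\<Sum>i\<in>T. x$i * y$i)"
  using assms
proof (induction T rule: finite_induct)
  case empty
  have "(\<chi> i. axis i 1 :: real^'n^'n) = mat 1" by (simp add: vec_eq_iff mat_def axis_def)
  then show ?case by simp
next
  case (insert k T)
  define c where "c i = (\<chi> i. if i \<in> T then axis i 1 + x$i *s y else axis i 1 :: real^'n^'n) $ i" for i
  have "(\<chi> i. if i \<in> insert k T then axis i 1 + x$i *s y else axis i 1 :: real^'n^'n)
       = (\<chi> i. if i = k then axis i 1 + x$i *s y else c i)"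
    using insert.hyps by (auto simp: vec_eq_iff c_def)
  also have "det \<dots> = det (\<chi> i. if i = k then axis i 1 else c i) + det (\<chi> i. if i = k then x$i *s y else c i)"
    by (rule det_row_add)
  also have "(\<chi> i. if i = k then axis i 1 else c i) = (\<chi> i. if i \<in> T then axis i 1 + x$i *s y else axis i 1 :: real^'n^'n)"
    using insert.hyps by (auto simp: vec_eq_iff c_def)
  also have "det (\<chi> i. if i = k then x$i *s y else c i) = x$k * y$k"
  proof (cases "x$k = 0")
    case True
    have "(\<chi> i. if i = k then x$i *s y else c i) = (\<chi> i. if i = k then 0 else c i)"
      using True by (auto simp: vec_eq_iff)
    then show ?thesis using det_row_0[of k c] True by simp
  next
    case False
    have "(\<chi> i. if i = k then x$i *s y else c i) =
          (\<chi> i. if i = k then x$k *s y else if i \<in> T then axis i 1 + (x$i / x$k) *s (x$k *s y) else axis i 1)"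
      using insert.hyps False by (auto simp: vec_eq_iff c_def)
    then show ?thesis using det_R[OF insert.hyps, of "x$k *s y" "\<lambda>i. x$i / x$k"] by simp
  qed
  finally show ?case using insert by simp
qed

lemma det_rank1:
  fixes x y :: "real^'n"
  shows "det (mat 1 + outer x y) = 1 + x \<bullet> y"
proof -
  have "mat 1 + outer x y = (\<chi> i. if i \<in> UNIV then axis i 1 + x$i *s y else axis i 1)"
    by (simp add: vec_eq_iff outer_def mat_def axis_def)
  then show ?thesis using det_P[of UNIV x y] by (simp add: inner_vec_def)
qed

lemma inv_props:
  fixes A :: "real^'n^'n"
  assumes "invertible A"
  shows "A ** matrix_inv A = mat 1" "matrix_inv A ** A = mat 1"
proof -
  from assms obtain B where "A ** B = mat 1 \<and> B ** A = mat 1" unfolding invertible_def by blast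
  then have "A ** matrix_inv A = mat 1 \<and> matrix_inv A ** A = mat 1"
    unfolding matrix_inv_def by (rule someI)
  then show "A ** matrix_inv A = mat 1" "matrix_inv A ** A = mat 1" by auto
qed

lemma inv_mv:
  fixes A :: "real^'n^'n"
  assumes "invertible A"
  shows "A *v (matrix_inv A *v w) = w"
  by (simp add: matrix_vector_mul_assoc inv_props[OF assms])

lemma mat_outer: "A ** outer u w = outer (A *v u) w"
  by (simp add: vec_eq_iff outer_def matrix_matrix_mult_def matrix_vector_mult_def sum_distrib_right mult.assoc)

lemma outer_mv: "outer u v *v x = (v \<bullet> x) *\<^sub>R u"
  by (simp add: vec_eq_iff outer_def matrix_vector_mult_def inner_vec_def sum_distrib_left mult_ac)

lemma det_update:
  fixes A :: "real^'n^'n"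
  assumes "invertible A"
  shows "det (A + c *\<^sub>R outer w w) = det A * (1 + c * (w \<bullet> (matrix_inv A *v w)))"
proof -
  have "A + c *\<^sub>R outer w w = A ** (mat 1 + outer (matrix_inv A *v (c *\<^sub>R w)) w)"
  proof -
    have "A ** (mat 1 + outer (matrix_inv A *v (c *\<^sub>R w)) w) = A + outer (c *\<^sub>R w) w"
      by (simp add: matrix_add_ldistrib mat_outer inv_mv[OF assms])
    also have "outer (c *\<^sub>R w) w = c *\<^sub>R outer w w" by (simp add: vec_eq_iff outer_def)
    finally show ?thesis by simp
  qed
  then have "det (A + c *\<^sub>R outer w w) = det A * (1 + (matrix_inv A *v (c *\<^sub>R w)) \<bullet> w)"
    by (simp add: det_mul det_rank1)
  also have "(matrix_inv A *v (c *\<^sub>R w)) \<bullet> w = c * (w \<bullet> (matrix_inv A *v w))"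
    by (simp add: inner_commute matrix_vector_mult_scaleR)
  finally show ?thesis .
qed

definition GS :: "real^'p^'n \<Rightarrow> ('p \<Rightarrow> real) \<Rightarrow> 'p set \<Rightarrow> real^'n^'n" where
  "GS W g S = mat 1 + (\<Sum>j\<in>S. g j *\<^sub>R outer (column j W) (column j W))"

lemma sum_mv: "(\<Sum>j\<in>S. A j) *v x = (\<Sum>j\<in>S. A j *v x)"
  by (induction S rule: infinite_finite_induct) (auto simp: matrix_vector_mult_add_rdistrib)

lemma scaleR_mv: "((c::real) *\<^sub>R (A::real^'n^'m)) *v x = c *\<^sub>R (A *v x)"
  by (simp add: vec_eq_iff matrix_vector_mult_def sum_distrib_left mult.assoc real_scaleR_def)

lemma GS_mv: "GS W g S *v x = x + (\<Sum>j\<in>S. (g j * (column j W \<bullet> x)) *\<^sub>R column j W)"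
  unfolding GS_def
  by (simp add: matrix_vector_mult_add_rdistrib sum_mv outer_mv scaleR_mv)

lemma GS_quad: "y \<bullet> (GS W g S *v x) = y \<bullet> x + (\<Sum>j\<in>S. g j * (column j W \<bullet> x) * (column j W \<bullet> y))"
  unfolding GS_mv by (simp add: inner_add_right inner_sum_right inner_commute mult.assoc)

lemma GS_sym: "y \<bullet> (GS W g S *v x) = x \<bullet> (GS W g S *v y)"
  unfolding GS_quad by (simp add: inner_commute mult_ac)

lemma GS_pos:
  assumes "\<And>j. g j \<ge> 0"
  shows "x \<bullet> x \<le> x \<bullet> (GS W g S *v x)"
proof -
  have "0 \<le> (\<Sum>j\<in>S. g j * (column j W \<bullet> x) * (column j W \<bullet> x))"
    by (intro sum_nonneg) (simp add: assms mult.assoc)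
  then show ?thesis unfolding GS_quad by simp
qed

lemma GS_insert:
  assumes "finite S" "k \<notin> S"
  shows "GS W g (insert k S) = GS W g S + g k *\<^sub>R outer (column k W) (column k W)"
  using assms by (simp add: GS_def add_ac)

lemma quad_bounds:
  fixes A :: "real^'n^'n"
  assumes inv: "invertible A" and pos: "\<And>x. x \<bullet> x \<le> x \<bullet> (A *v x)"
  shows "norm (matrix_inv A *v w) \<le> norm w" "0 \<le> w \<bullet> (matrix_inv A *v w)"
        "w \<bullet> (matrix_inv A *v w) \<le> (norm w)^2"
proof -
  define u where "u = matrix_inv A *v w"
  have Au: "A *v u = w" unfolding u_def by (rule inv_mv[OF inv])
  have 1: "u \<bullet> u \<le> u \<bullet> w" using pos[of u] Au by simp
  have 2: "u \<bullet> w \<le> norm u * norm w" by (rule norm_cauchy_schwarz)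
  have nu: "norm u \<le> norm w"
  proof (cases "norm u = 0")
    case True then show ?thesis by simp
  next
    case False
    then have "norm u > 0" by simp
    moreover have "norm u * norm u \<le> norm u * norm w"
      using 1 2 by (simp add: dot_square_norm power2_eq_square)
    ultimately show ?thesis by simp
  qed
  then show "norm (matrix_inv A *v w) \<le> norm w" by (simp add: u_def)
  show "0 \<le> w \<bullet> (matrix_inv A *v w)"
    using 1 by (simp add: u_def[symmetric] inner_commute order_trans[OF inner_ge_zero])
  have "norm u * norm w \<le> norm w * norm w" by (simp add: mult_right_mono nu)
  then show "w \<bullet> (matrix_inv A *v w) \<le> (norm w)^2"
    using 2 by (simp add: u_def[symmetric] inner_commute power2_eq_square)
qed

lemma det_GS_ge1:
  assumes "finite S" "\<And>j. g j \<ge> 0"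
  shows "1 \<le> det (GS W g S)"
  using assms(1)
proof (induction S rule: finite_induct)
  case empty
  then show ?case by (simp add: GS_def)
next
  case (insert k S)
  have inv: "invertible (GS W g S)" using insert.IH by (simp add: invertible_det_nz)
  have q: "0 \<le> column k W \<bullet> (matrix_inv (GS W g S) *v column k W)"
    by (rule quad_bounds(2)[OF inv GS_pos[OF assms(2)]])
  have "det (GS W g (insert k S)) = det (GS W g S) * (1 + g k * (column k W \<bullet> (matrix_inv (GS W g S) *v column k W)))"
    using insert.hyps by (simp add: GS_insert det_update[OF inv])
  moreover have "1 \<le> 1 + g k * (column k W \<bullet> (matrix_inv (GS W g S) *v column k W))"
    using q assms(2)[of k] by simp
  ultimately show ?case using insert.IH mult_mono[of 1 "det (GS W g S)" 1 "1 + g k * (column k W \<bullet> (matrix_inv (GS W g S) *v column k W))"]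
    by simp
qed

lemma GS_inv:
  assumes "finite S" "\<And>j. g j \<ge> 0"
  shows "invertible (GS W g S)"
proof -
  have "1 \<le> det (GS W g S)" by (rule det_GS_ge1[OF assms])
  then show ?thesis by (simp add: invertible_det_nz)
qed

lemma det_GS_bound:
  assumes fS: "finite S" and fT: "finite T" and disj: "S \<inter> T = {}" and g: "\<And>j. g j \<ge> 0"
  shows "det (GS W g S) \<le> det (GS W g (S \<union> T)) \<and>
         det (GS W g (S \<union> T)) \<le> det (GS W g S) * exp (\<Sum>j\<in>T. g j * (norm (column j W))^2)"
  using fT disj
proof (induction T rule: finite_induct)
  case empty
  then show ?case by simp
next
  case (insert k T)
  have kS: "k \<notin> S \<union> T" using insert by auto
  have fST: "finite (S \<union> T)" using fS insert by simp
  have IH: "det (GS W g S) \<le> det (GS W g (S \<union> T)) \<and>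
         det (GS W g (S \<union> T)) \<le> det (GS W g S) * exp (\<Sum>j\<in>T. g j * (norm (column j W))^2)"
    using insert by auto
  have inv: "invertible (GS W g (S \<union> T))" by (rule GS_inv[OF fST g])
  define q where "q = column k W \<bullet> (matrix_inv (GS W g (S \<union> T)) *v column k W)"
  have q0: "0 \<le> q" unfolding q_def by (rule quad_bounds(2)[OF inv GS_pos[OF g]])
  have q1: "q \<le> (norm (column k W))^2" unfolding q_def by (rule quad_bounds(3)[OF inv GS_pos[OF g]])
  have eq: "det (GS W g (S \<union> insert k T)) = det (GS W g (S \<union> T)) * (1 + g k * q)"
    using kS fST by (simp add: GS_insert det_update[OF inv] q_def)
  have d1: "1 \<le> det (GS W g (S \<union> T))" by (rule det_GS_ge1[OF fST g])
  have f1: "1 \<le> 1 + g k * q" using q0 g[of k] by simp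
  have f2: "1 + g k * q \<le> exp (g k * (norm (column k W))^2)"
  proof -
    have "1 + g k * q \<le> 1 + g k * (norm (column k W))^2" using q1 g[of k] by (simp add: mult_left_mono)
    also have "\<dots> \<le> exp (g k * (norm (column k W))^2)" by (rule exp_ge_add_one_self)
    finally show ?thesis .
  qed
  have low: "det (GS W g S) \<le> det (GS W g (S \<union> insert k T))"
  proof -
    have "det (GS W g (S \<union> T)) * 1 \<le> det (GS W g (S \<union> T)) * (1 + g k * q)"
      using d1 f1 by (intro mult_left_mono) auto
    then show ?thesis unfolding eq using IH by linarith
  qed
  have "det (GS W g (S \<union> insert k T)) \<le> det (GS W g (S \<union> T)) * exp (g k * (norm (column k W))^2)"
    unfolding eq using d1 f2 by (simp add: mult_left_mono)
  also have "\<dots> \<le> det (GS W g S) * exp (\<Sum>j\<in>T. g j * (norm (column j W))^2) * exp (g k * (norm (column k W))^2)"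
    using IH by (simp add: mult_right_mono)
  also have "\<dots> = det (GS W g S) * exp (\<Sum>j\<in>insert k T. g j * (norm (column j W))^2)"
    using insert.hyps by (simp add: exp_add mult_ac)
  finally show ?case using low by simp
qed

lemma mv_onorm: "norm (W *v x) \<le> onorm (\<lambda>x. W *v x) * norm (x::real^'p)"
  for W :: "real^'p^'n"
  using onorm[OF matrix_vector_mul_bounded_linear[of W]] by simp

lemma onorm_nonneg': "0 \<le> onorm (\<lambda>x. W *v x)" for W :: "real^'p^'n"
  using onorm_pos_le[OF matrix_vector_mul_bounded_linear[of W]] by simp

lemma tW_norm:
  fixes W :: "real^'p^'n"
  shows "norm (transpose W *v v) \<le> onorm (\<lambda>x. W *v x) * norm v"
proof -
  define a where "a = transpose W *v v"
  have "a \<bullet> a = v \<bullet> (W *v a)"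
    unfolding a_def by (simp add: dot_lmul_matrix)
  also have "\<dots> \<le> norm v * norm (W *v a)" by (rule norm_cauchy_schwarz)
  also have "\<dots> \<le> norm v * (onorm (\<lambda>x. W *v x) * norm a)"
    by (simp add: mult_left_mono mv_onorm)
  finally have *: "norm a * norm a \<le> (onorm (\<lambda>x. W *v x) * norm v) * norm a"
    by (simp add: dot_square_norm power2_eq_square mult_ac)
  show ?thesis
  proof (cases "norm a = 0")
    case True then show ?thesis unfolding a_def[symmetric]
      using onorm_nonneg'[of W] by simp
  next
    case False then have "norm a > 0" by simp
    with * show ?thesis unfolding a_def[symmetric] by simp
  qed
qed

lemma col_inner: "column j W \<bullet> v = (transpose W *v v) $ j"
  by (simp add: column_def inner_vec_def vector_matrix_mult_def mult.commute)

lemma norm_sq_sum: "(norm (x::real^'n))^2 = (\<Sum>i\<in>UNIV. (x$i)^2)"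
  unfolding power2_norm_eq_inner by (simp add: inner_vec_def power2_eq_square)

lemma frob:
  fixes W :: "real^'p^'n"
  shows "(\<Sum>j\<in>UNIV. (norm (column j W))^2) \<le> real CARD('n) * (onorm (\<lambda>x. W *v x))^2"
proof -
  have "(\<Sum>j\<in>UNIV. (norm (column j W))^2) = (\<Sum>j\<in>UNIV. \<Sum>i\<in>UNIV. (W$i$j)^2)"
    by (simp add: norm_sq_sum column_def)
  also have "\<dots> = (\<Sum>i\<in>UNIV. \<Sum>j\<in>UNIV. (W$i$j)^2)" by (rule sum.swap)
  also have "\<dots> = (\<Sum>i\<in>UNIV. (norm (transpose W *v axis i 1))^2)"
  proof (rule sum.cong[OF refl])
    fix i
    have "(transpose W *v axis i 1) $ j = W$i$j" for j
      using col_inner[of j W "axis i 1"] by (simp add: column_def inner_axis)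
    then show "(\<Sum>j\<in>UNIV. (W$i$j)^2) = (norm (transpose W *v axis i 1))^2"
      by (simp add: norm_sq_sum)
  qed
  also have "\<dots> \<le> (\<Sum>i\<in>(UNIV::'n set). (onorm (\<lambda>x. W *v x))^2)"
  proof (rule sum_mono)
    fix i :: 'n
    have "norm (transpose W *v axis i 1) \<le> onorm (\<lambda>x. W *v x)"
      using tW_norm[of W "axis i (1::real)"] by simp
    then show "(norm (transpose W *v axis i 1))^2 \<le> (onorm (\<lambda>x. W *v x))^2"
      by (simp add: power_mono)
  qed
  also have "\<dots> = real CARD('n) * (onorm (\<lambda>x. W *v x))^2" by simp
  finally show ?thesis .
qed

lemma quad_diff:
  fixes W :: "real^'p^'n" and z :: "real^'n"
  assumes g: "\<And>j. g j \<ge> 0" and gd: "\<And>j. j \<notin> S \<Longrightarrow> g j \<le> \<delta>" and d: "\<delta> \<ge> 0"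
  shows "\<bar>z \<bullet> (matrix_inv (GS W g S) *v z) - z \<bullet> (matrix_inv (GS W g UNIV) *v z)\<bar>
           \<le> \<delta> * (onorm (\<lambda>x. W *v x))^2 * (norm z)^2"
proof -
  let ?om = "onorm (\<lambda>x. W *v x)"
  define A where "A = GS W g S"
  define B where "B = GS W g UNIV"
  have iA: "invertible A" unfolding A_def by (rule GS_inv[OF _ g]) simp
  have iB: "invertible B" unfolding B_def by (rule GS_inv[OF _ g]) simp
  define u where "u = matrix_inv A *v z"
  define v where "v = matrix_inv B *v z"
  have Au: "A *v u = z" unfolding u_def by (rule inv_mv[OF iA])
  have Bv: "B *v v = z" unfolding v_def by (rule inv_mv[OF iB])
  have nu: "norm u \<le> norm z" unfolding u_def A_def by (rule quad_bounds(1)[OF iA[unfolded A_def] GS_pos[OF g]])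
  have nv: "norm v \<le> norm z" unfolding v_def B_def by (rule quad_bounds(1)[OF iB[unfolded B_def] GS_pos[OF g]])
  define f where "f j = g j * (column j W \<bullet> v) * (column j W \<bullet> u)" for j
  have zu: "z \<bullet> u = u \<bullet> v + (\<Sum>j\<in>UNIV. f j)"
    using GS_quad[of u W g UNIV v] Bv unfolding B_def f_def by (simp add: inner_commute)
  have zv: "z \<bullet> v = v \<bullet> u + (\<Sum>j\<in>S. f j)"
    using GS_quad[of v W g S u] Au unfolding A_def f_def by (simp add: inner_commute mult_ac)
  have split: "(\<Sum>j\<in>UNIV. f j) = (\<Sum>j\<in>S. f j) + (\<Sum>j\<in>UNIV - S. f j)"
    by (simp add: sum.subset_diff[of S UNIV f])
  have diff: "z \<bullet> u - z \<bullet> v = (\<Sum>j\<in>UNIV - S. f j)"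
    using zu zv split by (simp add: inner_commute)
  define a where "a j = (transpose W *v v) $ j" for j
  define b where "b j = (transpose W *v u) $ j" for j
  have fab: "f j = g j * a j * b j" for j by (simp add: f_def a_def b_def col_inner)
  have "\<bar>\<Sum>j\<in>UNIV - S. f j\<bar> \<le> (\<Sum>j\<in>UNIV - S. \<bar>f j\<bar>)" by (rule sum_abs)
  also have "\<dots> \<le> (\<Sum>j\<in>UNIV - S. \<delta> * (((a j)^2 + (b j)^2) / 2))"
  proof (rule sum_mono)
    fix j assume "j \<in> UNIV - S"
    then have gj: "g j \<le> \<delta>" using gd by auto
    have ab: "\<bar>a j * b j\<bar> \<le> ((a j)^2 + (b j)^2) / 2"
    proof -
      have "0 \<le> (\<bar>a j\<bar> - \<bar>b j\<bar>)^2" by simp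
      then show ?thesis by (simp add: power2_eq_square algebra_simps abs_mult)
    qed
    have "\<bar>f j\<bar> = g j * \<bar>a j * b j\<bar>" using g[of j] by (simp add: fab abs_mult mult.assoc)
    also have "\<dots> \<le> \<delta> * (((a j)^2 + (b j)^2) / 2)"
      using gj g[of j] ab by (intro mult_mono) auto
    finally show "\<bar>f j\<bar> \<le> \<delta> * (((a j)^2 + (b j)^2) / 2)" .
  qed
  also have "\<dots> \<le> (\<Sum>j\<in>UNIV. \<delta> * (((a j)^2 + (b j)^2) / 2))"
    by (rule sum_mono2) (use d in auto)
  also have "\<dots> = \<delta> / 2 * ((norm (transpose W *v v))^2 + (norm (transpose W *v u))^2)"
    by (simp add: norm_sq_sum a_def b_def sum_distrib_left sum.distrib algebra_simps sum_divide_distrib add_divide_distrib)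
  also have "\<dots> \<le> \<delta> / 2 * ((?om * norm z)^2 + (?om * norm z)^2)"
  proof -
    have "norm (transpose W *v v) \<le> ?om * norm z"
      using tW_norm[of W v] nv onorm_nonneg'[of W] by (meson mult_left_mono order_trans)
    moreover have "norm (transpose W *v u) \<le> ?om * norm z"
      using tW_norm[of W u] nu onorm_nonneg'[of W] by (meson mult_left_mono order_trans)
    ultimately show ?thesis using d by (intro mult_left_mono add_mono power_mono) auto
  qed
  also have "\<dots> = \<delta> * ?om^2 * (norm z)^2" by (simp add: power_mult_distrib)
  finally show ?thesis using diff unfolding u_def v_def A_def B_def by simp
qed

lemma min_helper:
  fixes a b K :: real
  assumes "0 < a" "a \<le> b" "b \<le> a * exp K"
  shows "\<bar>min 1 b - min 1 a\<bar> \<le> exp K - 1"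
proof -
  have eK: "1 \<le> exp K" using assms by (smt (verit) mult_le_cancel_left1)
  show ?thesis
  proof (cases "a \<ge> 1")
  case True then show ?thesis using assms eK by simp
next
  case False
  have mm: "min 1 a \<le> min 1 b" using assms by auto
  have "min 1 b - min 1 a \<le> b - a" using False by simp
  also have "\<dots> \<le> a * (exp K - 1)" using assms by (simp add: algebra_simps)
  also have "\<dots> \<le> 1 * (exp K - 1)" using False eK by (intro mult_right_mono) auto
  finally show ?thesis using mm by (auto simp: abs_le_iff)
qed
qed

lemma min_lemma:
  fixes q qd D K :: real
  assumes "0 < q" "0 < qd" "q = qd * exp D" "\<bar>D\<bar> \<le> K"
  shows "\<bar>min 1 q - min 1 qd\<bar> \<le> exp K - 1"
proof (cases "qd \<le> q")
  case True
  have "q \<le> qd * exp K" using assms by (simp add: mult_left_mono)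
  then show ?thesis using min_helper[OF assms(2) True] by simp
next
  case False
  have e1: "qd = q * exp (-D)" unfolding assms(3) by (simp add: mult.assoc flip: exp_add)
  have e2: "exp (-D) \<le> exp K" using assms(4) by simp
  have "q * exp (-D) \<le> q * exp K" using assms(1) e2 by (intro mult_left_mono) auto
  then have "qd \<le> q * exp K" using e1 by simp
  then show ?thesis using min_helper[OF assms(1), of qd K] False by (simp add: abs_minus_commute)
qed

lemma ln_diff_bound:
  fixes a b b0 :: real
  assumes "b0 > 0" "a \<ge> b0" "b \<ge> b0"
  shows "\<bar>ln a - ln b\<bar> \<le> \<bar>a - b\<bar> / b0"
proof -
  have h: "ln x - ln y \<le> \<bar>x - y\<bar> / b0" if "x \<ge> b0" "y \<ge> b0" for x y
  proof -
    have "ln x - ln y = ln (x / y)" using that assms by (simp add: ln_div)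
    also have "\<dots> \<le> x / y - 1" using that assms by (intro ln_le_minus_one) auto
    also have "\<dots> = (x - y) / y" using that assms by (simp add: field_simps)
    also have "\<dots> \<le> \<bar>x - y\<bar> / y" using that assms by (intro divide_right_mono) auto
    also have "\<dots> \<le> \<bar>x - y\<bar> / b0" using that assms by (intro divide_left_mono) auto
    finally show ?thesis .
  qed
  show ?thesis using h[OF assms(2,3)] h[OF assms(3,2)] by (simp add: abs_minus_commute abs_le_iff)
qed

lemma exp_small:
  fixes x :: real
  assumes "0 \<le> x" "x \<le> 1/2"
  shows "exp x - 1 \<le> 2 * x"
proof -
  have "1 - x \<le> exp (-x)" using exp_ge_add_one_self[of "-x"] by simp
  then have "(1 - x) * exp x \<le> 1" by (simp add: exp_minus field_simps)
  then have "exp x - 1 \<le> x * exp x" by (simp add: algebra_simps)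
  moreover have "x * exp x \<le> x * 2"
  proof -
    have "exp x * (1 - x) \<le> 1" using \<open>(1 - x) * exp x \<le> 1\<close> by (simp add: mult.commute)
    then have "exp x \<le> 1 / (1 - x)" using assms by (simp add: field_simps)
    also have "\<dots> \<le> 2" using assms by (simp add: field_simps)
    finally show ?thesis using assms by (intro mult_left_mono) auto
  qed
  ultimately show ?thesis by simp
qed

lemma W_diag: "(W :: real^'p^'n) ** (\<chi> i j. if i = j then h j else 0) = (\<chi> a k. W$a$k * h k)"
  by (simp add: vec_eq_iff matrix_matrix_mult_def if_distrib cong: if_cong)

lemma WDW: "(W :: real^'p^'n) ** (\<chi> i j. if i = j then h j else 0) ** transpose W
   = (\<Sum>j\<in>UNIV. h j *\<^sub>R outer (column j W) (column j W))"
  unfolding W_diag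
  by (simp add: vec_eq_iff matrix_matrix_mult_def transpose_def sum_component outer_def column_def mult_ac)

lemma Mmat_diag: "Mmat (W :: real^'p^'n) (\<chi> i j. if i = j then h j else 0) t = GS W (\<lambda>j. 1/t * h j) UNIV"
  unfolding Mmat_def GS_def WDW by (simp add: scaleR_sum_right)

lemma Mmat_D: "Mmat (W :: real^'p^'n) (Dmat eta) t = GS W (\<lambda>j. 1/t * (1 / eta$j)) UNIV"
  unfolding Dmat_def Mmat_diag by simp

lemma Mmat_Dd: "Mmat (W :: real^'p^'n) (Dmat_delta \<delta> \<xi> \<xi>s eta) t
   = GS W (\<lambda>j. 1/t * (1 / eta$j)) {j. max (1/\<xi>) (1/\<xi>s) * (1 / eta$j) > \<delta>}"
proof -
  have "Dmat_delta \<delta> \<xi> \<xi>s eta = (\<chi> i j. if i = j then (if max (1/\<xi>) (1/\<xi>s) * (1 / eta$j) > \<delta> then 1/eta$j else 0) else 0)"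
    by (simp add: Dmat_delta_def vec_eq_iff)
  then have "Mmat W (Dmat_delta \<delta> \<xi> \<xi>s eta) t = GS W (\<lambda>j. 1/t * (if max (1/\<xi>) (1/\<xi>s) * (1 / eta$j) > \<delta> then 1/eta$j else 0)) UNIV"
    by (simp add: Mmat_diag)
  also have "\<dots> = GS W (\<lambda>j. 1/t * (1 / eta$j)) {j. max (1/\<xi>) (1/\<xi>s) * (1 / eta$j) > \<delta>}"
  proof -
    let ?P = "\<lambda>j. max (1/\<xi>) (1/\<xi>s) * (1 / eta$j) > \<delta>"
    have "(\<Sum>j\<in>UNIV. (1/t * (if ?P j then 1/eta$j else 0)) *\<^sub>R outer (column j W) (column j W))
        = (\<Sum>j\<in>UNIV. if ?P j then (1/t * (1/eta$j)) *\<^sub>R outer (column j W) (column j W) else 0)"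
      by (rule sum.cong) auto
    also have "\<dots> = (\<Sum>j\<in>{j. ?P j}. (1/t * (1/eta$j)) *\<^sub>R outer (column j W) (column j W))"
      by (subst sum.inter_filter[symmetric]) simp_all
    finally show ?thesis unfolding GS_def by simp
  qed
  finally show ?thesis .
qed

lemma lik_ln:
  fixes M :: "real^'n^'n"
  assumes "det M > 0" "b0 + z \<bullet> (matrix_inv M *v z) > 0"
  shows "lik a0 b0 z M > 0"
    "ln (lik a0 b0 z M) = - (1/2) * ln (det M) - (real CARD('n) + a0) / 2 * ln (b0 + z \<bullet> (matrix_inv M *v z))"
proof -
  show "lik a0 b0 z M > 0" using assms unfolding lik_def by simp
  show "ln (lik a0 b0 z M) = - (1/2) * ln (det M) - (real CARD('n) + a0) / 2 * ln (b0 + z \<bullet> (matrix_inv M *v z))"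
    using assms unfolding lik_def by (simp add: ln_mult ln_powr field_simps)
qed

lemma lik_bound:
  fixes W :: "real^'p^'n" and z :: "real^'n" and eta :: "real^'p"
  assumes a0: "a0 > 0" and b0: "b0 > 0" and d: "\<delta> > 0" and t: "t > 0"
    and ht: "1/t \<le> max (1/\<xi>) (1/\<xi>s)" and eta: "\<forall>j. eta$j > 0"
  shows "lik a0 b0 z (Mmat W (Dmat eta) t) > 0" "lik a0 b0 z (Mmat W (Dmat_delta \<delta> \<xi> \<xi>s eta) t) > 0"
    "\<bar>ln (lik a0 b0 z (Mmat W (Dmat eta) t)) - ln (lik a0 b0 z (Mmat W (Dmat_delta \<delta> \<xi> \<xi>s eta) t))\<bar>
       \<le> (real CARD('n) + (real CARD('n) + a0) * (norm z)\<^sup>2 / b0) * (onorm (\<lambda>x. W *v x))\<^sup>2 * \<delta> / 2"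
proof -
  let ?N = "real CARD('n)"
  let ?om = "onorm (\<lambda>x. W *v x)"
  define m where "m = max (1/\<xi>) (1/\<xi>s)"
  define g where "g j = 1/t * (1/eta$j)" for j
  define K where "K = {j. m * (1 / eta$j) > \<delta>}"
  have g0: "g j \<ge> 0" for j using t eta[rule_format, of j] by (simp add: g_def)
  have gd: "g j \<le> \<delta>" if "j \<notin> K" for j
  proof -
    have "g j \<le> m * (1/eta$j)" unfolding g_def using ht eta m_def
      by (intro mult_right_mono) (auto simp: less_imp_le)
    also have "\<dots> \<le> \<delta>" using that K_def by auto
    finally show ?thesis .
  qed
  have MG: "Mmat W (Dmat eta) t = GS W g UNIV" unfolding Mmat_D g_def ..
  have MdG: "Mmat W (Dmat_delta \<delta> \<xi> \<xi>s eta) t = GS W g K" unfolding Mmat_Dd g_def K_def m_def ..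
  define A where "A = GS W g UNIV"
  define B where "B = GS W g K"
  have iA: "invertible A" unfolding A_def by (rule GS_inv[OF _ g0]) simp
  have iB: "invertible B" unfolding B_def by (rule GS_inv[OF _ g0]) simp
  have dB1: "1 \<le> det B" unfolding B_def by (rule det_GS_ge1[OF _ g0]) simp
  have KU: "K \<union> (UNIV - K) = UNIV" by auto
  have db: "det B \<le> det A \<and> det A \<le> det B * exp (\<Sum>j\<in>UNIV - K. g j * (norm (column j W))^2)"
    using det_GS_bound[of K "UNIV - K" g W, OF _ _ _ g0] unfolding KU A_def B_def by simp
  have sb: "(\<Sum>j\<in>UNIV - K. g j * (norm (column j W))^2) \<le> \<delta> * ?N * ?om^2"
  proof -
    have "(\<Sum>j\<in>UNIV - K. g j * (norm (column j W))^2) \<le> (\<Sum>j\<in>UNIV - K. \<delta> * (norm (column j W))^2)"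
      using gd by (intro sum_mono mult_right_mono) auto
    also have "\<dots> \<le> (\<Sum>j\<in>UNIV. \<delta> * (norm (column j W))^2)"
      using d by (intro sum_mono2) auto
    also have "\<dots> = \<delta> * (\<Sum>j\<in>UNIV. (norm (column j W))^2)" by (simp add: sum_distrib_left)
    also have "\<dots> \<le> \<delta> * (?N * ?om^2)" using frob[of W] d by (intro mult_left_mono) auto
    finally show ?thesis by simp
  qed
  have dA0: "det A > 0" using db dB1 by linarith
  have lnd: "\<bar>ln (det A) - ln (det B)\<bar> \<le> \<delta> * ?N * ?om^2"
  proof -
    have "ln (det B) \<le> ln (det A)" using db dB1 by simp
    moreover have "ln (det A) \<le> ln (det B * exp (\<delta> * ?N * ?om^2))"
      using db sb dB1 dA0 by (smt (verit) exp_le_cancel_iff ln_le_cancel_iff mult_le_cancel_left_pos exp_gt_zero mult_pos_pos)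
    moreover have "ln (det B * exp (\<delta> * ?N * ?om^2)) = ln (det B) + \<delta> * ?N * ?om^2"
      using dB1 by (simp add: ln_mult)
    ultimately show ?thesis by linarith
  qed
  define x where "x = z \<bullet> (matrix_inv A *v z)"
  define y where "y = z \<bullet> (matrix_inv B *v z)"
  have x0: "0 \<le> x" unfolding x_def A_def by (rule quad_bounds(2)[OF iA[unfolded A_def] GS_pos[OF g0]])
  have y0: "0 \<le> y" unfolding y_def B_def by (rule quad_bounds(2)[OF iB[unfolded B_def] GS_pos[OF g0]])
  have xy: "\<bar>y - x\<bar> \<le> \<delta> * ?om^2 * (norm z)^2"
    unfolding x_def y_def A_def B_def by (rule quad_diff[OF g0 gd]) (use d in auto)
  have lnq: "\<bar>ln (b0 + x) - ln (b0 + y)\<bar> \<le> \<delta> * ?om^2 * (norm z)^2 / b0"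
  proof -
    have "\<bar>ln (b0 + x) - ln (b0 + y)\<bar> \<le> \<bar>(b0 + x) - (b0 + y)\<bar> / b0"
      by (rule ln_diff_bound) (use b0 x0 y0 in auto)
    also have "\<dots> \<le> \<delta> * ?om^2 * (norm z)^2 / b0"
      using xy b0 by (intro divide_right_mono) (auto simp: abs_minus_commute)
    finally show ?thesis .
  qed
  have LA: "lik a0 b0 z A > 0" "ln (lik a0 b0 z A) = - (1/2) * ln (det A) - (?N + a0) / 2 * ln (b0 + x)"
    using lik_ln[of A b0 z a0] dA0 x0 b0 unfolding x_def by auto
  have LB: "lik a0 b0 z B > 0" "ln (lik a0 b0 z B) = - (1/2) * ln (det B) - (?N + a0) / 2 * ln (b0 + y)"
    using lik_ln[of B b0 z a0] dB1 y0 b0 unfolding y_def by auto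
  show "lik a0 b0 z (Mmat W (Dmat eta) t) > 0" using LA MG A_def by simp
  show "lik a0 b0 z (Mmat W (Dmat_delta \<delta> \<xi> \<xi>s eta) t) > 0" using LB MdG B_def by simp
  have "\<bar>ln (lik a0 b0 z A) - ln (lik a0 b0 z B)\<bar>
       = \<bar>(1/2) * (ln (det B) - ln (det A)) + (?N + a0) / 2 * (ln (b0 + y) - ln (b0 + x))\<bar>"
    unfolding LA LB by (rule arg_cong[where f=abs]) (simp add: field_simps)
  also have "\<dots> \<le> (1/2) * \<bar>ln (det A) - ln (det B)\<bar> + (?N + a0) / 2 * \<bar>ln (b0 + x) - ln (b0 + y)\<bar>"
    using a0 by (simp add: abs_mult abs_minus_commute abs_triangle_ineq[THEN order_trans])
  also have "\<dots> \<le> (1/2) * (\<delta> * ?N * ?om^2) + (?N + a0) / 2 * (\<delta> * ?om^2 * (norm z)^2 / b0)"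
    using lnd lnq a0 by (intro add_mono mult_left_mono) auto
  also have "\<dots> = (?N + (?N + a0) * (norm z)\<^sup>2 / b0) * ?om\<^sup>2 * \<delta> / 2"
    using b0 by (simp add: field_simps)
  finally show "\<bar>ln (lik a0 b0 z (Mmat W (Dmat eta) t)) - ln (lik a0 b0 z (Mmat W (Dmat_delta \<delta> \<xi> \<xi>s eta) t))\<bar>
       \<le> (?N + (?N + a0) * (norm z)\<^sup>2 / b0) * ?om\<^sup>2 * \<delta> / 2"
    unfolding MG MdG A_def B_def .
qed

lemma q_rel:
  fixes Ls Lx Lds Ldx a b :: real
  assumes "Ls > 0" "Lx > 0" "Lds > 0" "Ldx > 0"
  shows "Ls / Lx * a / b = (Lds / Ldx * a / b) * exp ((ln Ls - ln Lds) - (ln Lx - ln Ldx))"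
proof -
  have "exp ((ln Ls - ln Lds) - (ln Lx - ln Ldx)) = (Ls / Lds) / (Lx / Ldx)"
    using assms by (simp only: exp_diff exp_ln)
  then show ?thesis using assms by (cases "b = 0") (simp_all add: field_simps)
qed

lemma abs_half: "\<bar>a::real\<bar> \<le> R / 2 \<Longrightarrow> \<bar>b\<bar> \<le> R / 2 \<Longrightarrow> \<bar>a - b\<bar> \<le> R"
  by linarith

theorem mainTheorem3:
  fixes W :: "real^'p^'n" and z :: "real^'n" and a0 b0 :: real
  assumes a0: "a0 > 0" and b0: "b0 > 0"
  shows "(\<forall>\<delta> > 0. \<forall>\<xi> > 0. \<forall>\<xi>s > 0. \<forall>eta :: real^'p. (\<forall>j. eta $ j > 0) \<longrightarrow>
            \<bar>alpha a0 b0 W z eta \<xi> \<xi>s - alpha_approx \<delta> a0 b0 W z eta \<xi> \<xi>s\<bar>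
              \<le> exp ((real CARD('n) + (real CARD('n) + a0) * (norm z)\<^sup>2 / b0)
                      * (onorm (\<lambda>x. W *v x))\<^sup>2 * \<delta>) - 1)
       \<and> (\<exists>C. \<forall>\<^sub>F \<delta> in at_right 0. \<forall>\<xi> > 0. \<forall>\<xi>s > 0. \<forall>eta :: real^'p. (\<forall>j. eta $ j > 0) \<longrightarrow>
            \<bar>alpha a0 b0 W z eta \<xi> \<xi>s - alpha_approx \<delta> a0 b0 W z eta \<xi> \<xi>s\<bar> \<le> C * \<delta>)"
proof -
  define K0 where "K0 = (real CARD('n) + (real CARD('n) + a0) * (norm z)\<^sup>2 / b0) * (onorm (\<lambda>x. W *v x))\<^sup>2"
  have K00: "K0 \<ge> 0" unfolding K0_def using a0 b0 by simp
  have main: "\<bar>alpha a0 b0 W z eta \<xi> \<xi>s - alpha_approx \<delta> a0 b0 W z eta \<xi> \<xi>s\<bar> \<le> exp (K0 * \<delta>) - 1"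
    if d: "\<delta> > 0" and x: "\<xi> > 0" and xs: "\<xi>s > 0" and eta: "\<forall>j. eta $ j > 0" for \<delta> \<xi> \<xi>s eta
  proof -
    have h1: "1/\<xi> \<le> max (1/\<xi>) (1/\<xi>s)" "1/\<xi>s \<le> max (1/\<xi>) (1/\<xi>s)" by auto
    note Lx = lik_bound[where W=W and z=z, OF a0 b0 d x h1(1) eta]
    note Ls = lik_bound[where W=W and z=z, OF a0 b0 d xs h1(2) eta]
    define D where "D = (ln (lik a0 b0 z (Mmat W (Dmat eta) \<xi>s)) - ln (lik a0 b0 z (Mmat W (Dmat_delta \<delta> \<xi> \<xi>s eta) \<xi>s)))
       - (ln (lik a0 b0 z (Mmat W (Dmat eta) \<xi>)) - ln (lik a0 b0 z (Mmat W (Dmat_delta \<delta> \<xi> \<xi>s eta) \<xi>)))"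
    have DK: "\<bar>D\<bar> \<le> K0 * \<delta>" unfolding D_def K0_def by (rule abs_half[OF Ls(3) Lx(3)])
    have pp: "pi_xi t > 0" if "t > 0" for t using that unfolding pi_xi_def by simp
    have PA: "pi_xi \<xi>s * \<xi>s > 0" using pp[OF xs] xs by simp
    have PB: "pi_xi \<xi> * \<xi> > 0" using pp[OF x] x by simp
    define q where "q = qfun a0 b0 W z (Dmat eta) \<xi> \<xi>s"
    define qd where "qd = qfun a0 b0 W z (Dmat_delta \<delta> \<xi> \<xi>s eta) \<xi> \<xi>s"
    have qd0: "qd > 0" unfolding qd_def qfun_def by (rule divide_pos_pos[OF mult_pos_pos[OF divide_pos_pos[OF Ls(2) Lx(2)] PA] PB])
    have q0: "q > 0" unfolding q_def qfun_def by (rule divide_pos_pos[OF mult_pos_pos[OF divide_pos_pos[OF Ls(1) Lx(1)] PA] PB])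
    have qq: "q = qd * exp D" unfolding q_def qd_def qfun_def D_def
      by (rule q_rel[OF Ls(1) Lx(1) Ls(2) Lx(2)])
    have "\<bar>min 1 q - min 1 qd\<bar> \<le> exp (K0 * \<delta>) - 1" by (rule min_lemma[OF q0 qd0 qq DK])
    then show ?thesis unfolding alpha_def alpha_approx_def q_def qd_def .
  qed
  show ?thesis
  proof (intro conjI allI impI)
    fix \<delta> \<xi> \<xi>s :: real and eta :: "real^'p"
    assume "\<delta> > 0" "\<xi> > 0" "\<xi>s > 0" "\<forall>j. eta $ j > 0"
    then show "\<bar>alpha a0 b0 W z eta \<xi> \<xi>s - alpha_approx \<delta> a0 b0 W z eta \<xi> \<xi>s\<bar>
              \<le> exp ((real CARD('n) + (real CARD('n) + a0) * (norm z)\<^sup>2 / b0)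
                      * (onorm (\<lambda>x. W *v x))\<^sup>2 * \<delta>) - 1"
      using main unfolding K0_def by blast
  next
    show "\<exists>C. \<forall>\<^sub>F \<delta> in at_right 0. \<forall>\<xi> > 0. \<forall>\<xi>s > 0. \<forall>eta :: real^'p. (\<forall>j. eta $ j > 0) \<longrightarrow>
            \<bar>alpha a0 b0 W z eta \<xi> \<xi>s - alpha_approx \<delta> a0 b0 W z eta \<xi> \<xi>s\<bar> \<le> C * \<delta>"
    proof (intro exI[of _ "2 * K0"])
      have "\<forall>\<^sub>F \<delta> in at_right (0::real). \<delta> > 0 \<and> \<delta> < 1 / (2 * (K0 + 1))"
      proof -
        have "(0::real) < 1 / (2 * (K0 + 1))" using K00 by simp
        from eventually_at_right_real[OF this] show ?thesis by (rule eventually_mono) auto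
      qed
      then show "\<forall>\<^sub>F \<delta> in at_right 0. \<forall>\<xi> > 0. \<forall>\<xi>s > 0. \<forall>eta :: real^'p. (\<forall>j. eta $ j > 0) \<longrightarrow>
            \<bar>alpha a0 b0 W z eta \<xi> \<xi>s - alpha_approx \<delta> a0 b0 W z eta \<xi> \<xi>s\<bar> \<le> 2 * K0 * \<delta>"
      proof (rule eventually_mono, intro allI impI)
        fix \<delta> \<xi> \<xi>s :: real and eta :: "real^'p"
        assume dd: "\<delta> > 0 \<and> \<delta> < 1 / (2 * (K0 + 1))" and pos: "\<xi> > 0" "\<xi>s > 0" "\<forall>j. eta $ j > 0"
        have "K0 * \<delta> \<le> 1/2"
        proof -
          have "K0 * \<delta> \<le> (K0 + 1) * \<delta>" using dd by (simp add: mult_right_mono)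
          also have "\<dots> \<le> (K0 + 1) * (1 / (2 * (K0 + 1)))" using dd K00 by (intro mult_left_mono) auto
          also have "\<dots> = 1/2" using K00 by (simp add: field_simps)
          finally show ?thesis .
        qed
        then have "exp (K0 * \<delta>) - 1 \<le> 2 * (K0 * \<delta>)" using K00 dd by (intro exp_small) auto
        then show "\<bar>alpha a0 b0 W z eta \<xi> \<xi>s - alpha_approx \<delta> a0 b0 W z eta \<xi> \<xi>s\<bar> \<le> 2 * K0 * \<delta>"
          using main[of \<delta> \<xi> \<xi>s eta] dd pos by simp
      qed
    qed
  qed
qed

end
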